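(* Let $a\in\mathbb{R}$, $\sigma>0$, $\gamma>0$, $\lambda>0$, $T\ge1$, channel transition probabilities $p_{cc'}$, and let $V_t$, $t=0,\ldots,T$, be defined on $\mathbb{R}\times\{0,1\}$ by the value iteration in the context. Then for each $c\in\{0,1\}$ and $t\in\{0,1,\ldots,T\}$, $V_t(\Delta,c)$ depends on $\Delta$ only through $|\Delta|$ and is non-decreasing in $|\Delta|$.
   Context: $p_{01},p_{10}\in[0,1]$, $p_{00}=1-p_{01}$, $p_{11}=1-p_{10}$; $\psi(v)=e^{-v^2/(2\sigma^2)}$. Value iteration (for minimizing $\mathbb{E}\exp(\gamma\sum_t(\lambda u(t)+(1-u(t)c(t))\Delta(t)^2))$ for an estimation error $\Delta$ over a two-state Markov channel): $V_0\equiv1$, $Q_{t+1}(\Delta,c;0)=e^{\gamma\Delta^2}\sum_{c_+\in\{0,1\}}p_{cc_+}\int_{\mathbb{R}}\psi(\Delta_+-a\Delta)V_t(\Delta_+,c_+)d\Delta_+$, $Q_{t+1}(\Delta,c;1)=(1-c)e^{\gamma(\lambda+\Delta^2)}\sum_{c_+}p_{cc_+}\int_{\mathbb{R}}\psi(\Delta_+-a\Delta)V_t(\Delta_+,c_+)d\Delta_++c\,e^{\gamma\lambda}\sum_{c_+}p_{cc_+}\int_{\mathbb{R}}\psi(\Delta_+)V_t(\Delta_+,c_+)d\Delta_+$, $V_{t+1}(\Delta,c)=\min_{u\in\{0,1\}}Q_{t+1}(\Delta,c;u)$. *)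

theory Defs
  imports "HOL-Analysis.Analysis"
begin

text \<open>Channel states are encoded as naturals 0 and 1.
  Transition probabilities: p00 = 1 - p01, p11 = 1 - p10.\<close>
definition ptrans :: "real \<Rightarrow> real \<Rightarrow> nat \<Rightarrow> nat \<Rightarrow> real" where
  "ptrans p01 p10 c c' =
     (if c = 0 then (if c' = 0 then 1 - p01 else p01)
      else (if c' = 0 then p10 else 1 - p10))"

definition psi :: "real \<Rightarrow> real \<Rightarrow> real" where
  "psi \<sigma> v = exp (- (v ^ 2) / (2 * \<sigma> ^ 2))"

text \<open>Expected continuation:
  sum over c+ of p(c,c+) * integral over R of psi(D+ - a*D) * V(D+, c+).
  Values are extended nonnegative reals (integrals may diverge).\<close>
definition cont ::
  "real \<Rightarrow> real \<Rightarrow> real \<Rightarrow> real \<Rightarrow> (real \<Rightarrow> nat \<Rightarrow> ennreal) \<Rightarrow> real \<Rightarrow> nat \<Rightarrow> ennreal" where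
  "cont a \<sigma> p01 p10 V D c =
     (\<Sum>c'\<in>{0,1}. ennreal (ptrans p01 p10 c c') *
        (\<integral>\<^sup>+ x. ennreal (psi \<sigma> (x - a * D)) * V x c' \<partial>lborel))"

definition Q0 ::
  "real \<Rightarrow> real \<Rightarrow> real \<Rightarrow> real \<Rightarrow> real \<Rightarrow> (real \<Rightarrow> nat \<Rightarrow> ennreal) \<Rightarrow> real \<Rightarrow> nat \<Rightarrow> ennreal" where
  "Q0 a \<sigma> \<gamma> p01 p10 V D c = ennreal (exp (\<gamma> * D ^ 2)) * cont a \<sigma> p01 p10 V D c"

definition Q1 ::
  "real \<Rightarrow> real \<Rightarrow> real \<Rightarrow> real \<Rightarrow> real \<Rightarrow> real \<Rightarrow> (real \<Rightarrow> nat \<Rightarrow> ennreal) \<Rightarrow> real \<Rightarrow> nat \<Rightarrow> ennreal" where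
  "Q1 a \<sigma> \<gamma> lam p01 p10 V D c =
     ennreal ((1 - real c) * exp (\<gamma> * (lam + D ^ 2))) * cont a \<sigma> p01 p10 V D c
     + ennreal (real c * exp (\<gamma> * lam)) * cont a \<sigma> p01 p10 V 0 c"

fun Vit ::
  "real \<Rightarrow> real \<Rightarrow> real \<Rightarrow> real \<Rightarrow> real \<Rightarrow> real \<Rightarrow> nat \<Rightarrow> real \<Rightarrow> nat \<Rightarrow> ennreal" where
  "Vit a \<sigma> \<gamma> lam p01 p10 0 D c = 1"
| "Vit a \<sigma> \<gamma> lam p01 p10 (Suc t) D c =
     min (Q0 a \<sigma> \<gamma> p01 p10 (Vit a \<sigma> \<gamma> lam p01 p10 t) D c)
         (Q1 a \<sigma> \<gamma> lam p01 p10 (Vit a \<sigma> \<gamma> lam p01 p10 t) D c)"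

end

theory Submission
  imports Defs
begin

lemma meas_sym:
  fixes f :: "real \<Rightarrow> ennreal"
  assumes hmono: "\<And>x y. \<bar>x\<bar> \<le> \<bar>y\<bar> \<Longrightarrow> f x \<le> f y"
  shows "f \<in> borel_measurable borel"
proof (rule borel_measurableI_le)
  fix y
  have "is_interval {x. f x \<le> y}"
    unfolding is_interval_1
  proof (clarsimp)
    fix a b x assume "f a \<le> y" "f b \<le> y" "a \<le> x" "x \<le> b"
    then have "\<bar>x\<bar> \<le> \<bar>a\<bar> \<or> \<bar>x\<bar> \<le> \<bar>b\<bar>" by auto
    then show "f x \<le> y" using hmono \<open>f a \<le> y\<close> \<open>f b \<le> y\<close> order_trans by metis
  qed
  then show "{x \<in> space borel. f x \<le> y} \<in> sets borel"
    using real_interval_borel_measurable by simp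
qed

lemma psi_even: "psi \<sigma> (- v) = psi \<sigma> v"
  by (simp add: psi_def)

lemma psi_anti: "\<bar>u\<bar> \<le> \<bar>v\<bar> \<Longrightarrow> psi \<sigma> v \<le> psi \<sigma> u"
proof -
  assume "\<bar>u\<bar> \<le> \<bar>v\<bar>"
  then have "u ^ 2 \<le> v ^ 2" by (simp add: abs_le_square_iff)
  then have "- (v ^ 2) / (2 * \<sigma> ^ 2) \<le> - (u ^ 2) / (2 * \<sigma> ^ 2)"
    by (intro divide_right_mono) auto
  then show ?thesis by (simp add: psi_def)
qed

lemma psi_meas[measurable]: "(\<lambda>x. psi \<sigma> (x - m)) \<in> borel_measurable borel"
  unfolding psi_def by measurable

lemma ennreal_rearr:
  fixes F G :: ennreal and A B :: real
  assumes "0 \<le> B" "B \<le> A" "G \<le> F"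
  shows "ennreal B * F + ennreal A * G \<le> ennreal A * F + ennreal B * G"
proof -
  have e: "ennreal A = ennreal B + ennreal (A - B)"
    using assms by (simp add: ennreal_plus[symmetric])
  have "ennreal (A - B) * G \<le> ennreal (A - B) * F"
    using assms by (intro mult_left_mono) auto
  then have h1: "ennreal B * F + (ennreal B * G + ennreal (A - B) * G)
      \<le> ennreal B * F + (ennreal B * G + ennreal (A - B) * F)"
    by (intro add_mono) auto
  have eq1: "ennreal B * F + ennreal A * G = ennreal B * F + (ennreal B * G + ennreal (A - B) * G)"
    unfolding e by (simp add: distrib_right)
  have eq2: "ennreal A * F + ennreal B * G = ennreal B * F + (ennreal B * G + ennreal (A - B) * F)"
    unfolding e by (simp add: distrib_right add_ac)
  show ?thesis by (subst eq1, subst eq2, rule h1)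
qed

lemma G_split:
  fixes f :: "real \<Rightarrow> ennreal"
  assumes f[measurable]: "f \<in> borel_measurable borel"
  shows "(\<integral>\<^sup>+x. ennreal (psi \<sigma> (x - m)) * f x \<partial>lborel) =
     (\<integral>\<^sup>+x. indicator {k..} x * (ennreal (psi \<sigma> (x - m)) * f x)
        + indicator {k<..} x * (ennreal (psi \<sigma> (x - (2*k - m))) * f (2*k - x)) \<partial>lborel)"
proof -
  have "(\<integral>\<^sup>+x. ennreal (psi \<sigma> (x - m)) * f x \<partial>lborel) =
     (\<integral>\<^sup>+x. indicator {k..} x * (ennreal (psi \<sigma> (x - m)) * f x)
        + indicator {..<k} x * (ennreal (psi \<sigma> (x - m)) * f x) \<partial>lborel)"
    by (intro nn_integral_cong) (auto simp: indicator_def)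
  also have "\<dots> = (\<integral>\<^sup>+x. indicator {k..} x * (ennreal (psi \<sigma> (x - m)) * f x) \<partial>lborel)
      + (\<integral>\<^sup>+x. indicator {..<k} x * (ennreal (psi \<sigma> (x - m)) * f x) \<partial>lborel)"
    by (intro nn_integral_add) auto
  also have "(\<integral>\<^sup>+x. indicator {..<k} x * (ennreal (psi \<sigma> (x - m)) * f x) \<partial>lborel)
      = (\<integral>\<^sup>+x. indicator {..<k} (2*k + -1 * x) * (ennreal (psi \<sigma> ((2*k + -1 * x) - m)) * f (2*k + -1 * x)) \<partial>lborel)"
    using nn_integral_real_affine[of "\<lambda>x. indicator {..<k} x * (ennreal (psi \<sigma> (x - m)) * f x)" "-1" "2*k"]
    by simp
  also have "\<dots> = (\<integral>\<^sup>+x. indicator {k<..} x * (ennreal (psi \<sigma> (x - (2*k - m))) * f (2*k - x)) \<partial>lborel)"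
  proof -
    have "\<And>x. psi \<sigma> ((2*k + -1 * x) - m) = psi \<sigma> (x - (2*k - m))"
      using psi_even[of \<sigma> "x - (2*k - m)" for x] by (simp add: algebra_simps)
    moreover have "\<And>x. indicator {..<k} (2*k + -1 * x) = (indicator {k<..} x :: ennreal)"
      by (auto simp: indicator_def)
    ultimately show ?thesis by simp
  qed
  also have "(\<integral>\<^sup>+x. indicator {k..} x * (ennreal (psi \<sigma> (x - m)) * f x) \<partial>lborel) + \<dots>
     = (\<integral>\<^sup>+x. indicator {k..} x * (ennreal (psi \<sigma> (x - m)) * f x)
        + indicator {k<..} x * (ennreal (psi \<sigma> (x - (2*k - m))) * f (2*k - x)) \<partial>lborel)"
    by (intro nn_integral_add[symmetric]) auto
  finally show ?thesis .
qed


lemma G_sym: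
  fixes f :: "real \<Rightarrow> ennreal"
  assumes hmono: "\<And>x y. \<bar>x\<bar> \<le> \<bar>y\<bar> \<Longrightarrow> f x \<le> f y"
  shows "(\<integral>\<^sup>+x. ennreal (psi \<sigma> (x - (-m))) * f x \<partial>lborel) =
         (\<integral>\<^sup>+x. ennreal (psi \<sigma> (x - m)) * f x \<partial>lborel)"
proof -
  note f[measurable] = meas_sym[OF hmono]
  have ev: "\<And>x. f (-x) = f x" using hmono by (metis abs_minus_cancel antisym order_refl)
  have "(\<integral>\<^sup>+x. ennreal (psi \<sigma> (x - (-m))) * f x \<partial>lborel)
     = (\<integral>\<^sup>+x. ennreal (psi \<sigma> ((0 + -1 * x) - (-m))) * f (0 + -1 * x) \<partial>lborel)"
  proof -
    have "(\<lambda>x. ennreal (psi \<sigma> (x - (-m))) * f x) \<in> borel_measurable borel" by measurable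
    from nn_integral_real_affine[OF this, of "-1" 0] show ?thesis by simp
  qed
  also have "\<dots> = (\<integral>\<^sup>+x. ennreal (psi \<sigma> (x - m)) * f x \<partial>lborel)"
  proof -
    have "\<And>x. psi \<sigma> ((0 + -1 * x) - (-m)) = psi \<sigma> (x - m)"
      using psi_even[of \<sigma> "x - m" for x] by (simp add: algebra_simps)
    then show ?thesis using ev by simp
  qed
  finally show ?thesis .
qed

lemma G_mono_nonneg:
  fixes f :: "real \<Rightarrow> ennreal"
  assumes hmono: "\<And>x y. \<bar>x\<bar> \<le> \<bar>y\<bar> \<Longrightarrow> f x \<le> f y"
    and m: "0 \<le> m" "m \<le> m'"
  shows "(\<integral>\<^sup>+x. ennreal (psi \<sigma> (x - m)) * f x \<partial>lborel) \<le>
         (\<integral>\<^sup>+x. ennreal (psi \<sigma> (x - m')) * f x \<partial>lborel)"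
proof -
  note f[measurable] = meas_sym[OF hmono]
  define k where "k = (m + m') / 2"
  have k1: "2*k - m = m'" and k2: "2*k - m' = m" by (simp_all add: k_def field_simps)
  have A: "(\<integral>\<^sup>+x. ennreal (psi \<sigma> (x - m)) * f x \<partial>lborel) =
     (\<integral>\<^sup>+x. indicator {k..} x * (ennreal (psi \<sigma> (x - m)) * f x)
        + indicator {k<..} x * (ennreal (psi \<sigma> (x - m')) * f (2*k - x)) \<partial>lborel)"
    using G_split[OF f, where \<sigma>=\<sigma> and m=m and k=k] unfolding k1 .
  have B: "(\<integral>\<^sup>+x. ennreal (psi \<sigma> (x - m')) * f x \<partial>lborel) =
     (\<integral>\<^sup>+x. indicator {k..} x * (ennreal (psi \<sigma> (x - m')) * f x)
        + indicator {k<..} x * (ennreal (psi \<sigma> (x - m)) * f (2*k - x)) \<partial>lborel)"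
    using G_split[OF f, where \<sigma>=\<sigma> and m=m' and k=k] unfolding k2 .
  show ?thesis unfolding A B
  proof (intro nn_integral_mono)
    fix x :: real
    consider "x < k" | "x = k" | "k < x" by linarith
    then show "indicator {k..} x * (ennreal (psi \<sigma> (x - m)) * f x)
        + indicator {k<..} x * (ennreal (psi \<sigma> (x - m')) * f (2*k - x))
      \<le> indicator {k..} x * (ennreal (psi \<sigma> (x - m')) * f x)
        + indicator {k<..} x * (ennreal (psi \<sigma> (x - m)) * f (2*k - x))"
    proof cases
      case 1 then show ?thesis by (simp add: indicator_def)
    next
      case 2
      have "x - m = - (x - m')" using 2 by (simp add: k_def field_simps)
      then have "psi \<sigma> (x - m) = psi \<sigma> (x - m')"
        by (metis psi_even)
      then show ?thesis using 2 by (simp add: indicator_def)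
    next
      case 3
      have "psi \<sigma> (x - m) \<le> psi \<sigma> (x - m')"
        using 3 m by (intro psi_anti) (auto simp: k_def)
      moreover have "f (2*k - x) \<le> f x"
      proof (intro hmono)
        have "2*k = m + m'" by (simp add: k_def)
        then show "\<bar>2*k - x\<bar> \<le> \<bar>x\<bar>" using 3 m unfolding k_def by linarith
      qed
      moreover have "0 \<le> psi \<sigma> (x - m)" by (simp add: psi_def)
      ultimately have "ennreal (psi \<sigma> (x - m)) * f x + ennreal (psi \<sigma> (x - m')) * f (2*k - x)
          \<le> ennreal (psi \<sigma> (x - m')) * f x + ennreal (psi \<sigma> (x - m)) * f (2*k - x)"
        by (intro ennreal_rearr)
      then show ?thesis using 3 by (simp add: indicator_def)
    qed
  qed
qed

lemma G_mono:
  fixes f :: "real \<Rightarrow> ennreal"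
  assumes hmono: "\<And>x y. \<bar>x\<bar> \<le> \<bar>y\<bar> \<Longrightarrow> f x \<le> f y"
    and m: "\<bar>m\<bar> \<le> \<bar>m'\<bar>"
  shows "(\<integral>\<^sup>+x. ennreal (psi \<sigma> (x - m)) * f x \<partial>lborel) \<le>
         (\<integral>\<^sup>+x. ennreal (psi \<sigma> (x - m')) * f x \<partial>lborel)"
proof -
  have abs_eq: "(\<integral>\<^sup>+x. ennreal (psi \<sigma> (x - \<bar>u\<bar>)) * f x \<partial>lborel) =
         (\<integral>\<^sup>+x. ennreal (psi \<sigma> (x - u)) * f x \<partial>lborel)" for u
  proof (cases "u \<ge> 0")
    case False
    then have "\<bar>u\<bar> = - u" by simp
    then show ?thesis using G_sym[where f=f and \<sigma>=\<sigma> and m=u, OF hmono] by simp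
  qed simp
  show ?thesis
    using G_mono_nonneg[where f=f and m="\<bar>m\<bar>" and m'="\<bar>m'\<bar>" and \<sigma>=\<sigma>, OF hmono] m unfolding abs_eq by simp
qed


lemma cont_mono:
  assumes hV: "\<And>c' x y. c' \<in> {0::nat, 1} \<Longrightarrow> \<bar>x\<bar> \<le> \<bar>y\<bar> \<Longrightarrow> V x c' \<le> V y c'"
    and D: "\<bar>D\<bar> \<le> \<bar>D'\<bar>"
  shows "cont a \<sigma> p01 p10 V D c \<le> cont a \<sigma> p01 p10 V D' c"
proof -
  have aD: "\<bar>a * D\<bar> \<le> \<bar>a * D'\<bar>" using D by (simp add: abs_mult mult_left_mono)
  have "(\<integral>\<^sup>+ x. ennreal (psi \<sigma> (x - a * D)) * V x c' \<partial>lborel)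
     \<le> (\<integral>\<^sup>+ x. ennreal (psi \<sigma> (x - a * D')) * V x c' \<partial>lborel)" if "c' \<in> {0,1}" for c'
    using G_mono[where f="\<lambda>x. V x c'" and m="a*D" and m'="a*D'" and \<sigma>=\<sigma>, OF hV[OF that] aD] .
  then show ?thesis unfolding cont_def
    by (intro sum_mono mult_left_mono) auto
qed

lemma Vit_mono:
  assumes "\<gamma> > 0"
  shows "c \<in> {0::nat, 1} \<Longrightarrow> \<bar>D\<bar> \<le> \<bar>D'\<bar> \<Longrightarrow>
    Vit a \<sigma> \<gamma> lam p01 p10 t D c \<le> Vit a \<sigma> \<gamma> lam p01 p10 t D' c"
proof (induction t arbitrary: c D D')
  case 0
  then show ?case by simp
next
  case (Suc t)
  let ?V = "Vit a \<sigma> \<gamma> lam p01 p10 t"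
  have cm: "cont a \<sigma> p01 p10 ?V D c \<le> cont a \<sigma> p01 p10 ?V D' c"
    by (rule cont_mono[OF Suc.IH Suc.prems(2)])
  have sq: "D ^ 2 \<le> D' ^ 2" using Suc.prems(2) by (simp add: abs_le_square_iff)
  have e1: "ennreal (exp (\<gamma> * D ^ 2)) \<le> ennreal (exp (\<gamma> * D' ^ 2))"
    using sq assms by (intro ennreal_leI) (simp add: mult_left_mono)
  have e2: "ennreal (exp (\<gamma> * (lam + D ^ 2))) \<le> ennreal (exp (\<gamma> * (lam + D' ^ 2)))"
    using sq assms by (intro ennreal_leI) (simp add: mult_left_mono)
  have q0: "Q0 a \<sigma> \<gamma> p01 p10 ?V D c \<le> Q0 a \<sigma> \<gamma> p01 p10 ?V D' c"
    unfolding Q0_def using e1 cm by (intro mult_mono) auto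
  have q1: "Q1 a \<sigma> \<gamma> lam p01 p10 ?V D c \<le> Q1 a \<sigma> \<gamma> lam p01 p10 ?V D' c"
    using Suc.prems(1)
  proof
    assume "c = 0"
    then show ?thesis unfolding Q1_def using e2 cm by (simp add: mult_mono)
  next
    assume "c \<in> {1}"
    then show ?thesis unfolding Q1_def by simp
  qed
  show ?case using q0 q1 by (simp add: min.coboundedI1 min.coboundedI2)
qed

theorem lemma3:
  fixes a \<sigma> \<gamma> lam p01 p10 :: real and T :: nat
  assumes "\<sigma> > 0" and "\<gamma> > 0" and "lam > 0" and "T \<ge> 1"
    and "0 \<le> p01" and "p01 \<le> 1" and "0 \<le> p10" and "p10 \<le> 1"
  shows "\<forall>t \<le> T. \<forall>c \<in> {0::nat, 1}.
           (\<forall>D D'. \<bar>D\<bar> = \<bar>D'\<bar> \<longrightarrow> Vit a \<sigma> \<gamma> lam p01 p10 t D c = Vit a \<sigma> \<gamma> lam p01 p10 t D' c)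
         \<and> (\<forall>D D'. \<bar>D\<bar> \<le> \<bar>D'\<bar> \<longrightarrow> Vit a \<sigma> \<gamma> lam p01 p10 t D c \<le> Vit a \<sigma> \<gamma> lam p01 p10 t D' c)"
  using Vit_mono[OF assms(2)] by (metis antisym order_refl)

end
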